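(* Let $N\ge4$ and $C_N=\frac{N(N-4)}{4}$. Then for every complex-valued $u\in C_0^\infty(\mathbb{R}^N\setminus\{0\})$, $$\begin{aligned}\int_{\mathbb{R}^N}|\Delta u|^2dx&=C_N^2\int_{\mathbb{R}^N}\frac{|u|^2}{|x|^4}dx+\int_{\mathbb{R}^N}\left|\Delta u+\frac{C_N}{|x|^2}u\right|^2dx\\&\quad+2C_N\int_{\mathbb{R}^N}\frac{1}{|x|^2}\left|\nabla|u|+\frac{N-4}{2}|u|\frac{x}{|x|^2}\right|^2dx+2C_N\int_{\mathbb{R}^N}\frac{|\nabla u|^2-|\nabla|u||^2}{|x|^2}dx.\end{aligned}$$
   Context: $\Delta$ is the Euclidean Laplacian, $\nabla$ the Euclidean gradient, $|\cdot|$ the Euclidean norm (for complex vectors $|\nabla u|^2=\sum_j|\partial_ju|^2$). *)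

theory Defs
  imports "HOL-Analysis.Analysis"
begin

definition pderiv_at :: "(real^'n \<Rightarrow> 'b::real_normed_vector) \<Rightarrow> 'n \<Rightarrow> real^'n \<Rightarrow> 'b" where
  "pderiv_at f i x = frechet_derivative f (at x) (axis i 1)"

fun Ck :: "nat \<Rightarrow> (real^'n \<Rightarrow> 'b::real_normed_vector) \<Rightarrow> bool" where
  "Ck 0 f = continuous_on UNIV f"
| "Ck (Suc k) f = (f differentiable_on UNIV \<and> continuous_on UNIV f
                   \<and> (\<forall>i. Ck k (pderiv_at f i)))"

definition smooth :: "(real^'n \<Rightarrow> 'b::real_normed_vector) \<Rightarrow> bool" where
  "smooth f = (\<forall>k. Ck k f)"

definition test_fun_punct :: "(real^'n \<Rightarrow> complex) \<Rightarrow> bool" where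
  "test_fun_punct u = (smooth u \<and> compact (closure {x. u x \<noteq> 0})
                       \<and> 0 \<notin> closure {x. u x \<noteq> 0})"

definition laplacian :: "(real^'n \<Rightarrow> complex) \<Rightarrow> real^'n \<Rightarrow> complex" where
  "laplacian u x = (\<Sum>i\<in>UNIV. pderiv_at (pderiv_at u i) i x)"

definition grad_sq :: "(real^'n \<Rightarrow> complex) \<Rightarrow> real^'n \<Rightarrow> real" where
  "grad_sq u x = (\<Sum>i\<in>UNIV. (cmod (pderiv_at u i x))^2)"

text \<open>Gradient of the (Lipschitz, possibly non-smooth) function |u|: the classical gradient
  where |u| is differentiable, 0 elsewhere (this agrees a.e. with the weak gradient).\<close>
definition grad_abs :: "(real^'n \<Rightarrow> complex) \<Rightarrow> real^'n \<Rightarrow> real^'n" where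
  "grad_abs u x = (if (\<lambda>y. cmod (u y)) differentiable (at x)
                   then (\<chi> i. pderiv_at (\<lambda>y. cmod (u y)) i x) else 0)"

end

theory Submission
  imports Defs
begin


lemma deriv_integral_zero:
  fixes W d :: "real^'n \<Rightarrow> real" and i :: 'n
  assumes deriv: "\<And>x. ((\<lambda>t. W (x + t *\<^sub>R axis i 1)) has_real_derivative d x) (at 0)"
    and Wm: "W \<in> borel_measurable borel" and dm: "d \<in> borel_measurable borel"
    and K: "compact K" and W0: "\<And>x. x \<notin> K \<Longrightarrow> W x = 0"
    and Wb: "\<And>x. \<bar>W x\<bar> \<le> BW" and db: "\<And>x. \<bar>d x\<bar> \<le> B"
  shows "(LINT x|lborel. d x) = 0"
proof -
  define e :: "real^'n" where "e = axis i 1"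
  have ne: "norm e = 1" unfolding e_def by simp
  obtain R where R: "R > 0" "\<And>x. x \<in> K \<Longrightarrow> norm x \<le> R"
    using compact_imp_bounded[OF K] bounded_pos by blast
  define h :: "nat \<Rightarrow> real" where "h n = inverse (real (Suc n))" for n
  have hpos: "h n > 0" for n unfolding h_def by simp
  have hle: "h n \<le> 1" for n unfolding h_def by (simp add: field_simps)
  define s where "s n x = (W (h n *\<^sub>R e + x) - W x) / h n" for n x
  have B0: "B \<ge> 0" using db[of 0] by simp
  have hlim: "filterlim h (at 0) sequentially"
  proof -
    have "h \<longlonglongrightarrow> 0" unfolding h_def[abs_def] by (rule LIMSEQ_inverse_real_of_nat)
    moreover have "\<forall>n. h n \<in> UNIV \<and> h n \<noteq> 0" using hpos by (simp add: less_imp_neq[symmetric])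
    ultimately show ?thesis unfolding filterlim_at by (simp add: always_eventually)
  qed
  have lim: "(\<lambda>n. s n x) \<longlonglongrightarrow> d x" for x
  proof -
    have "((\<lambda>y. (W (x + y *\<^sub>R e) - W (x + 0 *\<^sub>R e)) / (y - 0)) \<longlongrightarrow> d x) (at 0)"
      using deriv[of x] unfolding has_field_derivative_iff e_def by simp
    from filterlim_compose[OF this hlim] show ?thesis
      by (simp add: s_def add.commute o_def)
  qed
  have dd: "((\<lambda>t. W (x + t *\<^sub>R e)) has_real_derivative d (x + t *\<^sub>R e)) (at t)" for x t
  proof -
    have "((\<lambda>y. W ((x + t *\<^sub>R e) + y *\<^sub>R e)) has_real_derivative d (x + t *\<^sub>R e)) (at 0)"
      using deriv unfolding e_def by blast
    then have "((\<lambda>y. W (x + (y + t) *\<^sub>R e)) has_real_derivative d (x + t *\<^sub>R e)) (at 0)"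
      by (simp add: algebra_simps)
    then show ?thesis using DERIV_shift[where f="\<lambda>t. W (x + t *\<^sub>R e)" and x=0 and z=t]
      by simp
  qed
  have bound: "\<bar>s n x\<bar> \<le> B * indicator (cball 0 (R+1)) x" for n x
  proof (cases "x \<in> cball 0 (R+1)")
    case True
    have "\<exists>z. 0 < z \<and> z < h n \<and> W (x + h n *\<^sub>R e) - W (x + 0 *\<^sub>R e) = (h n - 0) * d (x + z *\<^sub>R e)"
      by (rule MVT2[OF hpos[of n], of "\<lambda>t. W (x + t *\<^sub>R e)" "\<lambda>t. d (x + t *\<^sub>R e)"]) (rule dd)
    then obtain z where "W (x + h n *\<^sub>R e) - W (x + 0 *\<^sub>R e) = (h n - 0) * d (x + z *\<^sub>R e)"
      by blast
    then have "s n x = d (x + z *\<^sub>R e)" using hpos[of n] by (simp add: s_def add.commute)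
    then show ?thesis using True db by simp
  next
    case False
    then have "norm x > R + 1" by simp
    then have 1: "x \<notin> K" using R by force
    have "norm x \<le> norm (h n *\<^sub>R e + x) + norm (h n *\<^sub>R e)"
      using norm_triangle_ineq4[of "h n *\<^sub>R e + x" "h n *\<^sub>R e"] by simp
    moreover have "norm (h n *\<^sub>R e) \<le> 1" using hle[of n] hpos[of n] ne by simp
    ultimately have "norm (h n *\<^sub>R e + x) > R" using \<open>norm x > R + 1\<close> by linarith
    then have "h n *\<^sub>R e + x \<notin> K" using R by force
    then have "W (h n *\<^sub>R e + x) = 0" by (rule W0)
    moreover have "W x = 0" using 1 by (rule W0)
    ultimately have "s n x = 0" by (simp add: s_def)
    then show ?thesis using False by simp
  qed
  have Wint: "integrable lborel W"
  proof -
    have i1: "integrable lborel (\<lambda>x. BW * indicator (cball 0 R) x :: real)"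
      using emeasure_bounded_finite[of "cball 0 R"] by (intro integrable_mult_right integrable_real_indicator) auto
    have ae: "AE x in lborel. norm (W x) \<le> norm (BW * indicator (cball 0 R) x :: real)"
    proof (intro AE_I2)
      fix x show "norm (W x) \<le> norm (BW * indicator (cball 0 R) x :: real)"
        using Wb[of x] W0[of x] R(2)[of x] by (cases "x \<in> K") (auto simp: indicator_def)
    qed
    show ?thesis using Bochner_Integration.integrable_bound[OF i1 _ ae] Wm by simp
  qed
  have tr: "integrable lborel (\<lambda>x. W (c + x))" "(LINT x|lborel. W (c + x)) = (LINT x|lborel. W x)" for c :: "real^'n"
  proof -
    have "integrable (distr lborel borel ((+) c)) W" using Wint by (simp add: lborel_distr_plus)
    then show "integrable lborel (\<lambda>x. W (c + x))" using Wm by (subst (asm) integrable_distr_eq) auto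
    have "integral\<^sup>L (distr lborel borel ((+) c)) W = (LINT x|lborel. W (c + x))"
      using Wm by (intro integral_distr) auto
    then show "(LINT x|lborel. W (c + x)) = (LINT x|lborel. W x)" by (simp add: lborel_distr_plus)
  qed
  have int0: "(LINT x|lborel. s n x) = 0" for n
    unfolding s_def using tr[of "h n *\<^sub>R e"] Wint by simp
  have "(\<lambda>n. LINT x|lborel. s n x) \<longlonglongrightarrow> (LINT x|lborel. d x)"
  proof (rule integral_dominated_convergence[where w="\<lambda>x. B * indicator (cball 0 (R+1)) x"])
    show "d \<in> borel_measurable lborel" using dm by simp
    show "(\<lambda>x. s n x) \<in> borel_measurable lborel" for n using Wm unfolding s_def by measurable
    show "integrable lborel (\<lambda>x. B * indicator (cball 0 (R+1)) x :: real)"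
      using emeasure_bounded_finite[of "cball 0 (R+1)"] by (intro integrable_mult_right integrable_real_indicator) auto
    show "AE x in lborel. (\<lambda>n. s n x) \<longlonglongrightarrow> d x" using lim by simp
    show "AE x in lborel. norm (s n x) \<le> B * indicator (cball 0 (R+1)) x" for n
      using bound[of n] by (intro AE_I2) (metis real_norm_def)
  qed
  then have "(\<lambda>n. 0) \<longlonglongrightarrow> (LINT x|lborel. d x)" using int0 by simp
  then show ?thesis by (metis LIMSEQ_unique tendsto_const)
qed



lemma line_deriv:
  fixes f :: "real^'n \<Rightarrow> complex"
  assumes "f differentiable at y"
  shows "((\<lambda>t. f (y + t *\<^sub>R axis i 1)) has_derivative (\<lambda>t. t *\<^sub>R pderiv_at f i y)) (at 0)"
proof -
  have D: "(f has_derivative frechet_derivative f (at y)) (at y)"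
    using assms frechet_derivative_works by blast
  have lin: "linear (frechet_derivative f (at y))" using D has_derivative_linear by blast
  have g: "((\<lambda>t::real. y + t *\<^sub>R axis i 1) has_derivative (\<lambda>t. t *\<^sub>R axis i 1)) (at 0)"
    by (auto intro!: derivative_eq_intros)
  have "((\<lambda>t. f (y + t *\<^sub>R axis i 1)) has_derivative (\<lambda>t. frechet_derivative f (at y) (t *\<^sub>R axis i 1))) (at 0)"
    using has_derivative_compose[OF g] D by simp
  moreover have "frechet_derivative f (at y) (t *\<^sub>R axis i 1) = t *\<^sub>R pderiv_at f i y" for t
    using lin by (simp add: linear_scale pderiv_at_def)
  ultimately show ?thesis by simp
qed

lemma line_deriv_Re:
  fixes f :: "real^'n \<Rightarrow> complex"
  assumes "f differentiable at y"
  shows "((\<lambda>t. Re (f (y + t *\<^sub>R axis i 1))) has_real_derivative Re (pderiv_at f i y)) (at 0)"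
proof -
  have "((\<lambda>t. Re (f (y + t *\<^sub>R axis i 1))) has_derivative (\<lambda>t. Re (t *\<^sub>R pderiv_at f i y))) (at 0)"
    using has_derivative_Re[OF line_deriv[OF assms]] by simp
  moreover have "(\<lambda>t. Re (t *\<^sub>R pderiv_at f i y)) = (*) (Re (pderiv_at f i y))" by (auto simp: fun_eq_iff)
  ultimately show ?thesis by (simp add: has_field_derivative_def)
qed

lemma line_deriv_Im:
  fixes f :: "real^'n \<Rightarrow> complex"
  assumes "f differentiable at y"
  shows "((\<lambda>t. Im (f (y + t *\<^sub>R axis i 1))) has_real_derivative Im (pderiv_at f i y)) (at 0)"
proof -
  have "((\<lambda>t. Im (f (y + t *\<^sub>R axis i 1))) has_derivative (\<lambda>t. Im (t *\<^sub>R pderiv_at f i y))) (at 0)"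
    using has_derivative_Im[OF line_deriv[OF assms]] by simp
  moreover have "(\<lambda>t. Im (t *\<^sub>R pderiv_at f i y)) = (*) (Im (pderiv_at f i y))" by (auto simp: fun_eq_iff)
  ultimately show ?thesis by (simp add: has_field_derivative_def)
qed

lemma pderiv_local_zero:
  fixes f :: "real^'n \<Rightarrow> 'b::real_normed_vector"
  assumes "open S" "\<And>y. y \<in> S \<Longrightarrow> f y = 0" "x \<in> S"
  shows "pderiv_at f i x = 0"
proof -
  have "((\<lambda>_. 0) has_derivative (\<lambda>_. 0)) (at x)" by simp
  then have "(f has_derivative (\<lambda>_. 0)) (at x)"
    by (rule has_derivative_transform_within_open[OF _ assms(1) assms(3)]) (simp add: assms(2))
  then have "frechet_derivative f (at x) = (\<lambda>_. 0)" using frechet_derivative_at by metis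
  then show ?thesis by (simp add: pderiv_at_def)
qed

lemma grad_abs_eq:
  fixes u :: "real^'n \<Rightarrow> complex"
  assumes "u differentiable at x"
  shows "grad_abs u x = (\<chi> j. inner (u x) (pderiv_at u j x) / cmod (u x))"
proof (cases "u x = 0")
  case True
  show ?thesis
  proof (cases "(\<lambda>y. cmod (u y)) differentiable (at x)")
    case True2: True
    have dd: "((\<lambda>y. cmod (u y)) has_derivative frechet_derivative (\<lambda>y. cmod (u y)) (at x)) (at x)"
      using True2 frechet_derivative_works by blast
    have "frechet_derivative (\<lambda>y. cmod (u y)) (at x) = (\<lambda>v. 0)"
      using differential_zero_maxmin[of x UNIV, OF _ _ dd] True by auto
    then show ?thesis using True2 True by (simp add: grad_abs_def pderiv_at_def vec_eq_iff)
  next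
    case False
    then show ?thesis using True by (simp add: grad_abs_def vec_eq_iff)
  qed
next
  case False
  have D: "(u has_derivative frechet_derivative u (at x)) (at x)"
    using assms frechet_derivative_works by blast
  have "((\<lambda>y. cmod (u y)) has_derivative (\<lambda>h. inner (frechet_derivative u (at x) h) (sgn (u x)))) (at x)"
    using has_derivative_compose[OF D has_derivative_norm[OF False]] by simp
  then have d: "(\<lambda>y. cmod (u y)) differentiable (at x)"
    and fd: "frechet_derivative (\<lambda>y. cmod (u y)) (at x) = (\<lambda>h. inner (frechet_derivative u (at x) h) (sgn (u x)))"
    using differentiableI frechet_derivative_at by metis+
  show ?thesis using d False
    by (simp add: grad_abs_def vec_eq_iff pderiv_at_def fd sgn_div_norm inner_commute divide_inverse mult.commute)
qed



definition Wf :: "real \<Rightarrow> (real^'n \<Rightarrow> complex) \<Rightarrow> 'n \<Rightarrow> real^'n \<Rightarrow> real" where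
  "Wf k u i y = inner (u y) (pderiv_at u i y) / (norm y)^2 + k * (cmod (u y))^2 * y$i / (norm y)^4"

definition Ff :: "real \<Rightarrow> (real^'n \<Rightarrow> complex) \<Rightarrow> 'n \<Rightarrow> real^'n \<Rightarrow> real" where
  "Ff k u i y = (Re (pderiv_at u i y) * Re (pderiv_at u i y) + Re (u y) * Re (pderiv_at (pderiv_at u i) i y)
       + Im (pderiv_at u i y) * Im (pderiv_at u i y) + Im (u y) * Im (pderiv_at (pderiv_at u i) i y)) / (norm y)^2
     - 2 * (Re (u y) * Re (pderiv_at u i y) + Im (u y) * Im (pderiv_at u i y)) * y$i / ((norm y)^2)^2
     + k * (2 * (Re (u y) * Re (pderiv_at u i y) + Im (u y) * Im (pderiv_at u i y)) * y$i / ((norm y)^2)^2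
            + ((Re (u y))^2 + (Im (u y))^2) / ((norm y)^2)^2
            - 4 * ((Re (u y))^2 + (Im (u y))^2) * (y$i)^2 / ((norm y)^2)^3)"

lemma norm_line_sq:
  fixes x :: "real^'n"
  shows "(norm (x + t *\<^sub>R axis i 1))^2 = (norm x)^2 + 2 * t * x$i + t^2"
  unfolding power2_norm_eq_inner
  by (simp add: inner_add_left inner_add_right inner_axis inner_axis' inner_axis_axis
      power2_eq_square algebra_simps)

lemma deriv_alg:
  fixes a b pa pb :: "real \<Rightarrow> real"
  assumes da: "(a has_real_derivative a') (at 0)" and db: "(b has_real_derivative b') (at 0)"
    and dpa: "(pa has_real_derivative pa') (at 0)" and dpb: "(pb has_real_derivative pb') (at 0)"
    and s0: "s0 \<noteq> 0"
  shows "((\<lambda>t. (a t * pa t + b t * pb t) / (s0 + 2 * t * xi + t^2)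
      + k * ((a t)^2 + (b t)^2) * (xi + t) / (s0 + 2 * t * xi + t^2)^2) has_real_derivative
     (a' * pa 0 + a 0 * pa' + b' * pb 0 + b 0 * pb') / s0 - 2 * (a 0 * pa 0 + b 0 * pb 0) * xi / s0^2
     + k * (2 * (a 0 * a' + b 0 * b') * xi / s0^2 + ((a 0)^2 + (b 0)^2) / s0^2
            - 4 * ((a 0)^2 + (b 0)^2) * xi^2 / s0^3)) (at 0)"
  apply (rule derivative_eq_intros da db dpa dpb refl | simp add: s0)+
  using s0 by (simp add: field_simps power2_eq_square power3_eq_cube power4_eq_xxxx)


lemma W_deriv:
  fixes u :: "real^'n \<Rightarrow> complex" and x :: "real^'n"
  assumes x0: "x \<noteq> 0" and du: "u differentiable at x" and dp: "pderiv_at u i differentiable at x"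
  shows "((\<lambda>t. Wf k u i (x + t *\<^sub>R axis i 1)) has_real_derivative Ff k u i x) (at 0)"
proof -
  define e :: "real^'n" where "e = axis i 1"
  let ?p = "pderiv_at u i"
  have eq: "Wf k u i (x + t *\<^sub>R e) =
    (Re (u (x + t *\<^sub>R e)) * Re (?p (x + t *\<^sub>R e)) + Im (u (x + t *\<^sub>R e)) * Im (?p (x + t *\<^sub>R e)))
      / ((norm x)^2 + 2 * t * x$i + t^2)
    + k * ((Re (u (x + t *\<^sub>R e)))^2 + (Im (u (x + t *\<^sub>R e)))^2) * (x$i + t)
      / ((norm x)^2 + 2 * t * x$i + t^2)^2" for t
  proof -
    have "(norm (x + t *\<^sub>R e))^4 = ((norm (x + t *\<^sub>R e))^2)^2" by simp
    then show ?thesis unfolding Wf_def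
      by (simp only: norm_line_sq e_def inner_complex_def cmod_power2) (simp add: e_def)
  qed
  have s0: "(norm x)^2 \<noteq> 0" using x0 by simp
  have "((\<lambda>t. (Re (u (x + t *\<^sub>R e)) * Re (?p (x + t *\<^sub>R e)) + Im (u (x + t *\<^sub>R e)) * Im (?p (x + t *\<^sub>R e)))
      / ((norm x)^2 + 2 * t * x$i + t^2)
    + k * ((Re (u (x + t *\<^sub>R e)))^2 + (Im (u (x + t *\<^sub>R e)))^2) * (x$i + t)
      / ((norm x)^2 + 2 * t * x$i + t^2)^2) has_real_derivative Ff k u i x) (at 0)"
  proof -
    note D = deriv_alg[OF line_deriv_Re[OF du] line_deriv_Im[OF du] line_deriv_Re[OF dp] line_deriv_Im[OF dp] s0,
      where k=k and xi="x$i"]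
    show ?thesis unfolding e_def
      by (rule D[THEN DERIV_cong]) (simp add: Ff_def)
  qed
  moreover have "(\<lambda>t. Wf k u i (x + t *\<^sub>R e)) = (\<lambda>t. (Re (u (x + t *\<^sub>R e)) * Re (?p (x + t *\<^sub>R e)) + Im (u (x + t *\<^sub>R e)) * Im (?p (x + t *\<^sub>R e)))
      / ((norm x)^2 + 2 * t * x$i + t^2)
    + k * ((Re (u (x + t *\<^sub>R e)))^2 + (Im (u (x + t *\<^sub>R e)))^2) * (x$i + t)
      / ((norm x)^2 + 2 * t * x$i + t^2)^2)" by (rule ext, rule eq)
  ultimately show ?thesis unfolding e_def by simp
qed



lemma norm_sq_vec: "(norm (v::real^'n))^2 = (\<Sum>j\<in>UNIV. (v$j)^2)"
  unfolding power2_norm_eq_inner inner_vec_def by (simp add: power2_eq_square)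

lemma Ff_alt:
  "Ff k u i x = ((cmod (pderiv_at u i x))^2 + inner (u x) (pderiv_at (pderiv_at u i) i x)) / (norm x)^2
     - 2 * inner (u x) (pderiv_at u i x) * x$i / ((norm x)^2)^2
     + k * (2 * inner (u x) (pderiv_at u i x) * x$i / ((norm x)^2)^2 + (cmod (u x))^2 / ((norm x)^2)^2
            - 4 * (cmod (u x))^2 * (x$i)^2 / ((norm x)^2)^3)"
  unfolding Ff_def inner_complex_def cmod_power2 by (simp add: power2_eq_square algebra_simps)

lemma alg:
  fixes s N C nU cL RL SG SGx SP :: real
  assumes s0: "s > 0" and C: "C = N * (N - 4) / 4"
  shows "C^2 * (nU^2 / s^2) + (cL + 2 * (C / s) * RL + (C / s)^2 * nU^2)
    + 2 * C * ((1 / s) * (SG + 2 * ((N - 4) / 2 * nU / s) * SGx + ((N - 4) / 2 * nU / s)^2 * s))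
    + 2 * C * ((SP - SG) / s)
    = cL + 2 * C * ((SP + RL) / s - 2 * (nU * SGx) / s^2
      + (N - 2) / 2 * (2 * (nU * SGx) / s^2 + N * nU^2 / s^2 - 4 * nU^2 * s / s^3))"
proof -
  have e: "4 * nU^2 * s / s^3 = 4 * nU^2 / s^2" using s0 by (simp add: power2_eq_square power3_eq_cube)
  have e2: "((N - 4) / 2 * nU / s)^2 * s = (N - 4)^2 / 4 * nU^2 / s" using s0 by (simp add: power2_eq_square)
  show ?thesis unfolding e e2 C using s0
    apply (simp add: field_simps)
    apply algebra
    done
qed

lemma pointwise:
  fixes u :: "real^'n \<Rightarrow> complex" and x :: "real^'n" and C :: real
  assumes g: "grad_abs u x = (\<chi> j. inner (u x) (pderiv_at u j x) / cmod (u x))"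
    and C_def: "C = real CARD('n) * (real CARD('n) - 4) / 4"
  shows "C^2 * ((cmod (u x))^2 / norm x ^ 4)
       + (cmod (laplacian u x + of_real (C / norm x ^ 2) * u x))^2
       + 2 * C * ((1 / norm x ^ 2) *
            (norm (grad_abs u x + ((real CARD('n) - 4) / 2 * cmod (u x) / norm x ^ 2) *\<^sub>R x))^2)
       + 2 * C * ((grad_sq u x - (norm (grad_abs u x))^2) / norm x ^ 2)
     = (cmod (laplacian u x))^2 + 2 * C * (\<Sum>i\<in>UNIV. Ff ((real CARD('n) - 2) / 2) u i x)"
proof (cases "x = 0")
  case True
  then show ?thesis by (simp add: Ff_def)
next
  case False
  define N where "N = real CARD('n)"
  define s where "s = (norm x)^2"
  have s0: "s > 0" using False by (simp add: s_def)
  define U where "U = u x"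
  define L where "L = laplacian u x"
  define P where "P j = pderiv_at u j x" for j
  define Q where "Q j = pderiv_at (pderiv_at u j) j x" for j
  define G where "G j = inner U (P j) / cmod U" for j
  define nU where "nU = cmod U"
  define SP where "SP = (\<Sum>j\<in>UNIV. (cmod (P j))^2)"
  define RL where "RL = (\<Sum>j\<in>UNIV. inner U (Q j))"
  define Px where "Px = (\<Sum>j\<in>UNIV. inner U (P j) * x$j)"
  define SG where "SG = (\<Sum>j\<in>UNIV. (G j)^2)"
  define SGx where "SGx = (\<Sum>j\<in>UNIV. G j * x$j)"
  define cc where "cc = (N - 4) / 2 * nU / s"
  have sx: "(\<Sum>j\<in>UNIV. (x$j)^2) = s" unfolding s_def by (simp add: norm_sq_vec)
  have n4: "norm x ^ 4 = s^2" unfolding s_def by simp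
  have gs: "grad_sq u x = SP" unfolding grad_sq_def SP_def P_def ..
  have ga: "grad_abs u x = (\<chi> j. G j)" using g by (simp add: G_def U_def P_def)
  have t1: "(norm (grad_abs u x + cc *\<^sub>R x))^2 = SG + 2 * cc * SGx + cc^2 * s"
  proof -
    have "(norm (grad_abs u x + cc *\<^sub>R x))^2 = (\<Sum>j\<in>UNIV. (G j)^2 + 2 * cc * (G j * x$j) + cc^2 * (x$j)^2)"
      unfolding norm_sq_vec ga by (simp add: power2_eq_square algebra_simps)
    also have "\<dots> = SG + 2 * cc * SGx + cc^2 * s"
      by (simp add: sum.distrib sum_distrib_left[symmetric] SG_def SGx_def sx)
    finally show ?thesis .
  qed
  have t2: "(norm (grad_abs u x))^2 = SG" unfolding norm_sq_vec ga SG_def by simp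
  have t3: "nU * SGx = Px"
  proof -
    have e: "nU * (G j * x$j) = inner U (P j) * x$j" for j
      by (cases "U = 0") (simp_all add: nU_def G_def)
    show ?thesis unfolding SGx_def Px_def sum_distrib_left by (simp only: e)
  qed
  have t4: "(cmod (L + of_real (C / s) * U))^2 = (cmod L)^2 + 2 * (C / s) * inner U L + (C / s)^2 * nU^2"
  proof -
    have "(cmod (L + of_real (C / s) * U))^2 = inner (L + (C / s) *\<^sub>R U) (L + (C / s) *\<^sub>R U)"
      by (simp add: power2_norm_eq_inner scaleR_conv_of_real)
    also have "\<dots> = inner L L + 2 * (C / s) * inner U L + (C / s)^2 * inner U U"
      by (simp only: inner_add_left inner_add_right inner_scaleR_left inner_scaleR_right inner_commute[of L U])
        (simp add: power2_eq_square algebra_simps)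
    also have "\<dots> = (cmod L)^2 + 2 * (C / s) * inner U L + (C / s)^2 * nU^2"
      by (simp only: dot_square_norm nU_def)
    finally show ?thesis .
  qed
  have t5: "inner U L = RL"
    unfolding L_def laplacian_def RL_def Q_def by (simp add: inner_sum_right)
  have t6: "(\<Sum>i\<in>UNIV. Ff ((N - 2) / 2) u i x) = (SP + RL) / s - 2 * Px / s^2
      + (N - 2) / 2 * (2 * Px / s^2 + N * nU^2 / s^2 - 4 * nU^2 * s / s^3)"
  proof -
    have "(\<Sum>i\<in>UNIV. Ff ((N - 2) / 2) u i x) = (\<Sum>i\<in>UNIV. ((cmod (P i))^2 + inner U (Q i)) / s
      - 2 / s^2 * (inner U (P i) * x$i) + (N - 2) / 2 * (2 / s^2 * (inner U (P i) * x$i) + nU^2 / s^2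
      - 4 * nU^2 / s^3 * (x$i)^2))"
      unfolding Ff_alt by (simp add: P_def Q_def U_def nU_def s_def mult.assoc)
    also have "\<dots> = (SP + RL) / s - 2 / s^2 * Px + (N - 2) / 2 * (2 / s^2 * Px + N * (nU^2 / s^2)
      - 4 * nU^2 / s^3 * s)"
      by (simp add: sum.distrib sum_subtractf sum_distrib_left[symmetric] sum_divide_distrib[symmetric]
          SP_def RL_def Px_def sx N_def)
    finally show ?thesis by simp
  qed
  show ?thesis
    unfolding N_def[symmetric] s_def[symmetric] n4 gs U_def[symmetric] L_def[symmetric] nU_def[symmetric]
      cc_def[symmetric] t1 t2 t4 t5 t6 t3[symmetric]
    unfolding cc_def
    by (rule alg[OF s0 C_def[folded N_def]])
qed



lemma bdd_cpt:
  fixes f :: "real^'n \<Rightarrow> real"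
  assumes K: "compact K" and c: "continuous_on K f" and z: "\<And>x. x \<notin> K \<Longrightarrow> f x = 0"
  shows "\<exists>B. \<forall>x. \<bar>f x\<bar> \<le> B"
proof -
  have "bounded (f ` K)" by (rule compact_imp_bounded[OF compact_continuous_image[OF c K]])
  then obtain B where B: "\<And>y. y \<in> f ` K \<Longrightarrow> norm y \<le> B" unfolding bounded_iff by blast
  have "\<bar>f x\<bar> \<le> max B 0" for x
    using B[of "f x"] z[of x] by (cases "x \<in> K") auto
  then show ?thesis by blast
qed

lemma integrable_cpt:
  fixes f g :: "real^'n \<Rightarrow> real"
  assumes fm: "f \<in> borel_measurable borel" and K: "compact K" and z: "\<And>x. x \<notin> K \<Longrightarrow> f x = 0"
    and gc: "continuous_on K g" and b: "\<And>x. x \<in> K \<Longrightarrow> \<bar>f x\<bar> \<le> g x"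
  shows "integrable lborel f"
proof -
  have "bounded (g ` K)" by (rule compact_imp_bounded[OF compact_continuous_image[OF gc K]])
  then obtain B where B: "\<And>y. y \<in> g ` K \<Longrightarrow> norm y \<le> B" unfolding bounded_iff by blast
  have Ks: "K \<in> sets lborel" using compact_imp_closed[OF K] by simp
  have i1: "integrable lborel (\<lambda>x. B * indicator K x :: real)"
    using emeasure_bounded_finite[OF compact_imp_bounded[OF K]] Ks
    by (intro integrable_mult_right integrable_real_indicator) auto
  have ae: "AE x in lborel. norm (f x) \<le> norm (B * indicator K x :: real)"
  proof (intro AE_I2)
    fix x show "norm (f x) \<le> norm (B * indicator K x :: real)"
    proof (cases "x \<in> K")
      case True
      then have "\<bar>f x\<bar> \<le> g x" "\<bar>g x\<bar> \<le> B" using b B by auto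
      then show ?thesis using True by simp
    qed (simp add: z)
  qed
  show ?thesis using Bochner_Integration.integrable_bound[OF i1 _ ae] fm by simp
qed

lemma grad_abs_le:
  fixes u :: "real^'n \<Rightarrow> complex"
  assumes "u differentiable at x"
  shows "(norm (grad_abs u x))^2 \<le> grad_sq u x"
proof -
  have "(inner (u x) (pderiv_at u j x) / cmod (u x))^2 \<le> (cmod (pderiv_at u j x))^2" for j
  proof (cases "u x = 0")
    case False
    have "\<bar>inner (u x) (pderiv_at u j x)\<bar> \<le> cmod (u x) * cmod (pderiv_at u j x)"
      by (rule Cauchy_Schwarz_ineq2)
    then have "\<bar>inner (u x) (pderiv_at u j x) / cmod (u x)\<bar> \<le> cmod (pderiv_at u j x)"
      using False by (simp add: divide_le_eq mult.commute)
    then show ?thesis by (metis abs_ge_zero abs_power2 power_mono power2_abs)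
  qed simp
  then show ?thesis
    unfolding grad_abs_eq[OF assms] norm_sq_vec grad_sq_def by (simp add: sum_mono)
qed



theorem corollary4p4:
  fixes u :: "real^'n \<Rightarrow> complex" and C :: real
  assumes N4: "CARD('n) \<ge> 4"
    and C_def: "C = real CARD('n) * (real CARD('n) - 4) / 4"
    and u: "test_fun_punct u"
  shows "(LINT x|lborel. (cmod (laplacian u x))^2)
       = C^2 * (LINT x|lborel. (cmod (u x))^2 / norm x ^ 4)
       + (LINT x|lborel. (cmod (laplacian u x + of_real (C / norm x ^ 2) * u x))^2)
       + 2 * C * (LINT x|lborel. (1 / norm x ^ 2) *
            (norm (grad_abs u x + ((real CARD('n) - 4) / 2 * cmod (u x) / norm x ^ 2) *\<^sub>R x))^2)
       + 2 * C * (LINT x|lborel. (grad_sq u x - (norm (grad_abs u x))^2) / norm x ^ 2)"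
proof -
  define K where "K = closure {x. u x \<noteq> 0}"
  have sm: "smooth u" and K: "compact K" and K0: "0 \<notin> K"
    using u unfolding test_fun_punct_def K_def by auto
  have C2: "Ck (Suc (Suc 0)) u" using sm unfolding smooth_def by blast
  have C2': "u differentiable_on UNIV \<and> continuous_on UNIV u \<and> (\<forall>i. pderiv_at u i differentiable_on UNIV
     \<and> continuous_on UNIV (pderiv_at u i) \<and> (\<forall>j. continuous_on UNIV (pderiv_at (pderiv_at u i) j)))"
    using C2 by (simp only: Ck.simps) simp
  have du: "u differentiable at x" for x
    using C2' unfolding differentiable_on_def by blast
  have cu: "continuous_on UNIV u" using C2' by blast
  have dp: "pderiv_at u i differentiable at x" for i x
    using C2' unfolding differentiable_on_def by blast
  have cp: "continuous_on UNIV (pderiv_at u i)" for i using C2' by blast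
  have cq: "continuous_on UNIV (pderiv_at (pderiv_at u i) j)" for i j using C2' by blast
  have oK: "open (- K)" unfolding K_def by auto
  have sK: "{x. u x \<noteq> 0} \<subseteq> K" unfolding K_def by (rule closure_subset)
  have zu: "u x = 0" if "x \<notin> K" for x using that sK by blast
  have zp: "pderiv_at u i x = 0" if "x \<notin> K" for i x
    by (rule pderiv_local_zero[OF oK]) (use zu that in blast)+
  have zq: "pderiv_at (pderiv_at u i) j x = 0" if "x \<notin> K" for i j x
    by (rule pderiv_local_zero[OF oK]) (use zp that in blast)+
  have Kn0: "x \<noteq> 0" if "x \<in> K" for x using K0 that by blast
  have cuK: "continuous_on K u" using cu by (rule continuous_on_subset) simp
  have cpK: "continuous_on K (pderiv_at u i)" for i using cp by (rule continuous_on_subset) simp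
  have cqK: "continuous_on K (pderiv_at (pderiv_at u i) j)" for i j using cq by (rule continuous_on_subset) simp
  have mu[measurable]: "u \<in> borel_measurable borel" using cu by (rule borel_measurable_continuous_onI)
  have mp[measurable]: "pderiv_at u i \<in> borel_measurable borel" for i
    using cp by (rule borel_measurable_continuous_onI)
  have mq[measurable]: "pderiv_at (pderiv_at u i) j \<in> borel_measurable borel" for i j
    using cq by (rule borel_measurable_continuous_onI)
  have mc[measurable]: "(\<lambda>x::real^'n. x $ j) \<in> borel_measurable borel" for j
    by (rule borel_measurable_continuous_onI[OF linear_continuous_on[OF bounded_linear_vec_nth]])
  define k where "k = (real CARD('n) - 2) / 2"
  define cc where "cc x = (real CARD('n) - 4) / 2 * cmod (u x) / norm x ^ 2" for x :: "real^'n"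
  define f0 where "f0 = (\<lambda>x. (cmod (laplacian u x))^2)"
  define f1 where "f1 = (\<lambda>x::real^'n. (cmod (u x))^2 / norm x ^ 4)"
  define f2 where "f2 = (\<lambda>x. (cmod (laplacian u x + of_real (C / norm x ^ 2) * u x))^2)"
  define f3 where "f3 = (\<lambda>x. (1 / norm x ^ 2) *
            (norm (grad_abs u x + ((real CARD('n) - 4) / 2 * cmod (u x) / norm x ^ 2) *\<^sub>R x))^2)"
  define f4 where "f4 = (\<lambda>x. (grad_sq u x - (norm (grad_abs u x))^2) / norm x ^ 2)"
  have Kne: "\<forall>x\<in>K. norm x ^ 2 \<noteq> 0" "\<forall>x\<in>K. norm x ^ 4 \<noteq> 0" "\<forall>x\<in>K. norm x ^ 6 \<noteq> 0"
    "\<forall>x\<in>K. (norm x ^ 2)^2 \<noteq> 0" "\<forall>x\<in>K. (norm x ^ 2)^3 \<noteq> 0"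
    using Kn0 by auto
  have zlap: "laplacian u x = 0" if "x \<notin> K" for x using zq[OF that] by (simp add: laplacian_def)
  have zgs: "grad_sq u x = 0" if "x \<notin> K" for x using zp[OF that] by (simp add: grad_sq_def)
  have zga: "grad_abs u x = 0" if "x \<notin> K" for x using zu[OF that] by (simp add: grad_abs_eq[OF du] vec_eq_iff)
  have clap: "continuous_on K (laplacian u)"
    unfolding laplacian_def[abs_def] by (intro continuous_intros cqK)
  have cgs: "continuous_on K (grad_sq u)"
    unfolding grad_sq_def[abs_def] by (intro continuous_intros cpK)
  have gle: "(norm (grad_abs u x))^2 \<le> grad_sq u x" for x by (rule grad_abs_le[OF du])
  \<comment> \<open>the flux integrals vanish\<close>
  have Fint: "integrable lborel (Ff k u i)" for i
  proof (rule integrable_cpt[OF _ K, where g="\<lambda>x. \<bar>Ff k u i x\<bar>"])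
    show "Ff k u i \<in> borel_measurable borel" unfolding Ff_def[abs_def] by measurable
    show "Ff k u i x = 0" if "x \<notin> K" for x using zu[OF that] zp[OF that] zq[OF that] by (simp add: Ff_def)
    show "continuous_on K (\<lambda>x. \<bar>Ff k u i x\<bar>)" unfolding Ff_def
      by (intro continuous_intros cuK cpK cqK) (use Kne in auto)
  qed simp
  have F0: "(LINT x|lborel. Ff k u i x) = 0" for i
  proof -
    have "continuous_on K (Wf k u i)" unfolding Wf_def[abs_def]
      by (intro continuous_intros cuK cpK) (use Kne in auto)
    then obtain BW where BW: "\<And>x. \<bar>Wf k u i x\<bar> \<le> BW"
      using bdd_cpt[OF K, of "Wf k u i"] zu zp by (auto simp: Wf_def)
    have "continuous_on K (Ff k u i)" unfolding Ff_def[abs_def]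
      by (intro continuous_intros cuK cpK cqK) (use Kne in auto)
    then obtain B where B: "\<And>x. \<bar>Ff k u i x\<bar> \<le> B"
      using bdd_cpt[OF K, of "Ff k u i"] zu zp zq by (auto simp: Ff_def)
  show ?thesis
  proof (rule deriv_integral_zero[where W="Wf k u i" and i=i and K=K and BW=BW and B=B])
    show "((\<lambda>t. Wf k u i (x + t *\<^sub>R axis i 1)) has_real_derivative Ff k u i x) (at 0)" for x
    proof (cases "x \<in> K")
      case True
      then show ?thesis by (rule W_deriv[OF Kn0 du dp])
    next
      case False
      define T where "T = (\<lambda>t::real. x + t *\<^sub>R axis i 1) -` (- K)"
      have oT: "open T" unfolding T_def
        by (rule continuous_open_vimage[OF oK]) (intro continuous_intros)
      have T0: "0 \<in> T" using False by (simp add: T_def)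
      have "Ff k u i x = 0" using zu[OF False] zp[OF False] zq[OF False] by (simp add: Ff_def)
      moreover have "((\<lambda>t. 0) has_real_derivative 0) (at 0)" by simp
      then have "((\<lambda>t. Wf k u i (x + t *\<^sub>R axis i 1)) has_real_derivative 0) (at 0)"
      proof (rule has_field_derivative_transform_within_open[OF _ oT T0])
        fix t assume "t \<in> T"
        then have "x + t *\<^sub>R axis i 1 \<notin> K" by (simp add: T_def)
        then show "0 = Wf k u i (x + t *\<^sub>R axis i 1)"
          using zu zp by (simp add: Wf_def)
      qed
      ultimately show ?thesis by simp
    qed
    show "Wf k u i \<in> borel_measurable borel" unfolding Wf_def[abs_def] by measurable
    show "Ff k u i \<in> borel_measurable borel" unfolding Ff_def[abs_def] by measurable
    show "compact K" by (rule K)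
    show "Wf k u i x = 0" if "x \<notin> K" for x using zu[OF that] zp[OF that] by (simp add: Wf_def)
  qed (use BW B in auto)
  qed
  have i0: "integrable lborel f0"
  proof (rule integrable_cpt[OF _ K, where g=f0])
    show "f0 \<in> borel_measurable borel" unfolding f0_def laplacian_def by measurable
    show "f0 x = 0" if "x \<notin> K" for x using zlap[OF that] by (simp add: f0_def)
    show "continuous_on K f0" unfolding f0_def by (intro continuous_intros clap)
  qed (simp add: f0_def)
  have i1: "integrable lborel f1"
  proof (rule integrable_cpt[OF _ K, where g=f1])
    show "f1 \<in> borel_measurable borel" unfolding f1_def by measurable
    show "f1 x = 0" if "x \<notin> K" for x using zu[OF that] by (simp add: f1_def)
    show "continuous_on K f1" unfolding f1_def by (intro continuous_intros cuK) (use Kne in auto)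
  qed (simp add: f1_def)
  have i2: "integrable lborel f2"
  proof (rule integrable_cpt[OF _ K, where g=f2])
    show "f2 \<in> borel_measurable borel" unfolding f2_def laplacian_def by measurable
    show "f2 x = 0" if "x \<notin> K" for x using zu[OF that] zlap[OF that] by (simp add: f2_def)
    show "continuous_on K f2" unfolding f2_def by (intro continuous_intros cuK clap) (use Kne in auto)
  qed (simp add: f2_def)
  have f3eq: "f3 = (\<lambda>x. (1 / norm x ^ 2) * (\<Sum>j\<in>UNIV. (inner (u x) (pderiv_at u j x) / cmod (u x) + cc x * x$j)^2))"
    by (rule ext) (simp add: f3_def cc_def grad_abs_eq[OF du] norm_sq_vec)
  have f4eq: "f4 = (\<lambda>x. (grad_sq u x - (\<Sum>j\<in>UNIV. (inner (u x) (pderiv_at u j x) / cmod (u x))^2)) / norm x ^ 2)"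
    by (rule ext) (simp add: f4_def grad_abs_eq[OF du] norm_sq_vec)
  have i3: "integrable lborel f3"
  proof (rule integrable_cpt[OF _ K, where g="\<lambda>x. (1 / norm x ^ 2) * (2 * grad_sq u x + 2 * (norm (cc x *\<^sub>R x))^2)"])
    show "f3 \<in> borel_measurable borel" unfolding f3eq cc_def by measurable
    show "f3 x = 0" if "x \<notin> K" for x using zu[OF that] zga[OF that] by (simp add: f3_def)
    show "continuous_on K (\<lambda>x. (1 / norm x ^ 2) * (2 * grad_sq u x + 2 * (norm (cc x *\<^sub>R x))^2))"
      unfolding cc_def by (intro continuous_intros cuK cgs) (use Kne in auto)
    show "\<bar>f3 x\<bar> \<le> (1 / norm x ^ 2) * (2 * grad_sq u x + 2 * (norm (cc x *\<^sub>R x))^2)" for x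
    proof -
      have "norm (grad_abs u x + cc x *\<^sub>R x) \<le> norm (grad_abs u x) + norm (cc x *\<^sub>R x)"
        by (rule norm_triangle_ineq)
      then have "(norm (grad_abs u x + cc x *\<^sub>R x))^2 \<le> (norm (grad_abs u x) + norm (cc x *\<^sub>R x))^2"
        by (simp add: power_mono)
      also have "\<dots> \<le> 2 * (norm (grad_abs u x))^2 + 2 * (norm (cc x *\<^sub>R x))^2"
      proof -
        have "(norm (grad_abs u x) + norm (cc x *\<^sub>R x))^2 + (norm (grad_abs u x) - norm (cc x *\<^sub>R x))^2
          = 2 * (norm (grad_abs u x))^2 + 2 * (norm (cc x *\<^sub>R x))^2"
          by (simp add: power2_eq_square algebra_simps)
        then show ?thesis using zero_le_power2[of "norm (grad_abs u x) - norm (cc x *\<^sub>R x)"] by linarith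
      qed
      also have "\<dots> \<le> 2 * grad_sq u x + 2 * (norm (cc x *\<^sub>R x))^2" using gle[of x] by simp
      finally have "(norm (grad_abs u x + cc x *\<^sub>R x))^2 \<le> 2 * grad_sq u x + 2 * (norm (cc x *\<^sub>R x))^2" .
      then show ?thesis unfolding f3_def cc_def[symmetric]
        by (simp add: divide_right_mono)
    qed
  qed
  have i4: "integrable lborel f4"
  proof (rule integrable_cpt[OF _ K, where g="\<lambda>x. grad_sq u x / norm x ^ 2"])
    show "f4 \<in> borel_measurable borel" unfolding f4eq grad_sq_def by measurable
    show "f4 x = 0" if "x \<notin> K" for x using zgs[OF that] zga[OF that] by (simp add: f4_def)
    show "continuous_on K (\<lambda>x. grad_sq u x / norm x ^ 2)"
      by (intro continuous_intros cgs) (use Kne in auto)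
    show "\<bar>f4 x\<bar> \<le> grad_sq u x / norm x ^ 2" for x
      using gle[of x] by (simp add: f4_def divide_right_mono)
  qed
  have pw: "f0 x + 2 * C * (\<Sum>i\<in>UNIV. Ff k u i x) = C^2 * f1 x + f2 x + 2 * C * f3 x + 2 * C * f4 x" for x
    unfolding f0_def f1_def f2_def f3_def f4_def k_def
    by (rule pointwise[OF grad_abs_eq[OF du] C_def, of x, symmetric])
  have "(LINT x|lborel. f0 x + 2 * C * (\<Sum>i\<in>UNIV. Ff k u i x)) = integral\<^sup>L lborel f0 + 2 * C * (\<Sum>i\<in>UNIV. LINT x|lborel. Ff k u i x)"
    using i0 Fint by (simp add: Bochner_Integration.integral_sum)
  also have "\<dots> = integral\<^sup>L lborel f0" using F0 by simp
  finally have E1: "(LINT x|lborel. f0 x + 2 * C * (\<Sum>i\<in>UNIV. Ff k u i x)) = integral\<^sup>L lborel f0" .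
  have E2: "(LINT x|lborel. C^2 * f1 x + f2 x + 2 * C * f3 x + 2 * C * f4 x)
     = C^2 * integral\<^sup>L lborel f1 + integral\<^sup>L lborel f2 + 2 * C * integral\<^sup>L lborel f3 + 2 * C * integral\<^sup>L lborel f4"
  proof -
    have j1: "integrable lborel (\<lambda>x. C^2 * f1 x)" using i1 by (rule integrable_mult_right)
    have j2: "integrable lborel (\<lambda>x. C^2 * f1 x + f2 x)" using j1 i2 by (rule Bochner_Integration.integrable_add)
    have j3: "integrable lborel (\<lambda>x. 2 * C * f3 x)" using i3 by (rule integrable_mult_right)
    have j4: "integrable lborel (\<lambda>x. 2 * C * f4 x)" using i4 by (rule integrable_mult_right)
    have j5: "integrable lborel (\<lambda>x. C^2 * f1 x + f2 x + 2 * C * f3 x)" using j2 j3 by (rule Bochner_Integration.integrable_add)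
    have "(LINT x|lborel. C^2 * f1 x + f2 x + 2 * C * f3 x + 2 * C * f4 x)
        = (LINT x|lborel. C^2 * f1 x + f2 x + 2 * C * f3 x) + (LINT x|lborel. 2 * C * f4 x)"
      using j5 j4 by (rule Bochner_Integration.integral_add)
    also have "(LINT x|lborel. C^2 * f1 x + f2 x + 2 * C * f3 x) = (LINT x|lborel. C^2 * f1 x + f2 x) + (LINT x|lborel. 2 * C * f3 x)"
      using j2 j3 by (rule Bochner_Integration.integral_add)
    also have "(LINT x|lborel. C^2 * f1 x + f2 x) = (LINT x|lborel. C^2 * f1 x) + (LINT x|lborel. f2 x)"
      using j1 i2 by (rule Bochner_Integration.integral_add)
    finally show ?thesis by simp
  qed
  have "integral\<^sup>L lborel f0 = C^2 * integral\<^sup>L lborel f1 + integral\<^sup>L lborel f2 + 2 * C * integral\<^sup>L lborel f3 + 2 * C * integral\<^sup>L lborel f4"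
  proof -
    have "(LINT x|lborel. f0 x + 2 * C * (\<Sum>i\<in>UNIV. Ff k u i x)) = (LINT x|lborel. C^2 * f1 x + f2 x + 2 * C * f3 x + 2 * C * f4 x)"
      by (rule Bochner_Integration.integral_cong[OF refl pw])
    then show ?thesis using E1 E2 by linarith
  qed
  then show ?thesis unfolding f0_def f1_def f2_def f3_def f4_def .
qed


end
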